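(* $\mathsf{Seq}\vdash\forall x\,y\,\exists z\,\forall u\,\big[\,\exists v_1v_2[(v_1\vdash u)\circ v_2=z]\;\leftrightarrow\;\big(\exists v_1v_2[(v_1\vdash u)\circ v_2=x]\vee u=y\big)\,\big]$.
   Context: $\mathsf{Seq}$ is the theory in the language $\{e,\vdash,\circ\}$ ($e$ constant, $\vdash$ and $\circ$ binary functions) with axioms: ($\mathsf{Seq}_1$) $\forall xy[x\vdash y\neq e]$; ($\mathsf{Seq}_2$) $\forall x_1x_2y_1y_2[x_1\vdash x_2=y_1\vdash y_2\rightarrow(x_1=y_1\wedge x_2=y_2)]$; ($\mathsf{Seq}_3$) $\forall x[x\circ e=x]$; ($\mathsf{Seq}_4$) $\forall xyz[x\circ(y\vdash z)=(x\circ y)\vdash z]$; ($\mathsf{Seq}_5$) $\forall x[x=e\vee\exists yz[x=y\vdash z]]$. The claimed sentence is the translation of the adjunction axiom $\forall xy\exists z\forall u[u\in z\leftrightarrow(u\in x\vee u=y)]$ under $(x\in y)^\tau=\exists v_1v_2[(v_1\vdash x)\circ v_2=y]$. *)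

theory Defs
  imports Main
begin

text \<open>A structure (carrier = the type 'a) for the language {e, \<turnstile>, \<circ>}
  is given by a constant e, a binary function cns (for \<turnstile>) and a
  binary function cmp (for \<circ>). seq_model says it satisfies the axioms Seq1..Seq5.\<close>

definition seq_model :: "'a \<Rightarrow> ('a \<Rightarrow> 'a \<Rightarrow> 'a) \<Rightarrow> ('a \<Rightarrow> 'a \<Rightarrow> 'a) \<Rightarrow> bool" where
  "seq_model e cns cmp \<longleftrightarrow>
     (\<forall>x y. cns x y \<noteq> e) \<and>
     (\<forall>x1 x2 y1 y2. cns x1 x2 = cns y1 y2 \<longrightarrow> x1 = y1 \<and> x2 = y2) \<and>
     (\<forall>x. cmp x e = x) \<and>
     (\<forall>x y z. cmp x (cns y z) = cns (cmp x y) z) \<and>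
     (\<forall>x. x = e \<or> (\<exists>y z. x = cns y z))"

text \<open>Translated membership: (x \<in> y)^tau = \<exists>v1 v2. (v1 \<turnstile> x) \<circ> v2 = y.\<close>

definition seq_mem :: "('a \<Rightarrow> 'a \<Rightarrow> 'a) \<Rightarrow> ('a \<Rightarrow> 'a \<Rightarrow> 'a) \<Rightarrow> 'a \<Rightarrow> 'a \<Rightarrow> bool" where
  "seq_mem cns cmp x y \<longleftrightarrow> (\<exists>v1 v2. cmp (cns v1 x) v2 = y)"

end

theory Submission
  imports Defs
begin

theorem lemma4:
  fixes e :: 'a and cns cmp :: "'a \<Rightarrow> 'a \<Rightarrow> 'a"
  assumes "seq_model e cns cmp"
  shows "\<forall>x y. \<exists>z. \<forall>u. seq_mem cns cmp u z \<longleftrightarrow> (seq_mem cns cmp u x \<or> u = y)"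
proof (intro allI)
  fix x y
  have A: "(\<forall>x y. cns x y \<noteq> e) \<and>
     (\<forall>x1 x2 y1 y2. cns x1 x2 = cns y1 y2 \<longrightarrow> x1 = y1 \<and> x2 = y2) \<and>
     (\<forall>x. cmp x e = x) \<and>
     (\<forall>x y z. cmp x (cns y z) = cns (cmp x y) z) \<and>
     (\<forall>x. x = e \<or> (\<exists>y z. x = cns y z))"
    using assms unfolding seq_model_def .
  have S2: "\<And>a b c d. cns a b = cns c d \<Longrightarrow> a = c \<and> b = d" using conjunct1[OF conjunct2[OF A]] by blast
  have S3: "\<And>a. cmp a e = a" using conjunct1[OF conjunct2[OF conjunct2[OF A]]] by blast
  have S4: "\<And>a b c. cmp a (cns b c) = cns (cmp a b) c" using conjunct1[OF conjunct2[OF conjunct2[OF conjunct2[OF A]]]] by blast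
  have S5: "\<And>a. a = e \<or> (\<exists>b c. a = cns b c)" using conjunct2[OF conjunct2[OF conjunct2[OF conjunct2[OF A]]]] by blast
  show "\<exists>z. \<forall>u. seq_mem cns cmp u z \<longleftrightarrow> (seq_mem cns cmp u x \<or> u = y)"
  proof (rule exI[of _ "cns x y"], intro allI iffI)
    fix u assume "seq_mem cns cmp u (cns x y)"
    then obtain v1 v2 where h: "cmp (cns v1 u) v2 = cns x y" unfolding seq_mem_def by blast
    show "seq_mem cns cmp u x \<or> u = y"
    proof (cases "v2 = e")
      case True
      then have "cns v1 u = cns x y" using h S3 by simp
      then show ?thesis using S2 by blast
    next
      case False
      then obtain a b where "v2 = cns a b" using S5 by blast
      then have "cns (cmp (cns v1 u) a) b = cns x y" using h S4 by simp
      then have "cmp (cns v1 u) a = x" using S2 by blast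
      then show ?thesis unfolding seq_mem_def by blast
    qed
  next
    fix u assume "seq_mem cns cmp u x \<or> u = y"
    then show "seq_mem cns cmp u (cns x y)"
    proof
      assume "seq_mem cns cmp u x"
      then obtain v1 v2 where "cmp (cns v1 u) v2 = x" unfolding seq_mem_def by blast
      then have "cmp (cns v1 u) (cns v2 y) = cns x y" using S4 by simp
      then show ?thesis unfolding seq_mem_def by blast
    next
      assume "u = y"
      then have "cmp (cns x u) e = cns x y" using S3 by simp
      then show ?thesis unfolding seq_mem_def by blast
    qed
  qed
qed

end
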